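(* Let $S$ be a numerical semigroup with minimal generators $e<a_1<\dots<a_t$, blowup $B$ and generating tuple $\mathcal D=(e,d_1,\dots,d_t)$, $d_i=a_i-e$. Fix $0\le i<e$ and write ${\rm adj}(S_i)=\{u_0<u_1<u_2<\cdots\}$. Then for every $u\in{\rm adj}(S_i)$ there exists $s\in S_i$ with ${\rm d}_{\max}(s;S)=|\mathcal R(u)|$.
   Context: A numerical semigroup is a submonoid of $(\mathbb N,+)$ with finite complement in $\mathbb N$. Its minimal generators are $e<a_1<\dots<a_t$, and $e$ is called the multiplicity. An $S$-factorization of $n\in S$ is a tuple $(c_0,\dots,c_t)\in\mathbb N^{t+1}$ with $c_0e+\sum_{i\ge1}c_ia_i=n$; its length is $\sum c_i$. ${\rm ord}(n;S)$ is the maximum length of an $S$-factorization of $n$, and ${\rm d}_{\max}(n;S)$ is the number of $S$-factorizations of $n$ of length ${\rm ord}(n;S)$. The blowup of $S$ is $B=\langle e,d_1,\dots,d_t\rangle$ with $d_i=a_i-e$. A $B^{\mathcal D}$-factorization of $b\in B$ is a tuple $(x_0,\dots,x_t)\in\mathbb N^{t+1}$ with $x_0e+\sum_{i\ge1}x_id_i=b$, and its length is $\sum x_i$. The minimum such length is denoted $\min{\rm ord}(b;B^{\mathcal D})$, and $\mathcal P(b)$ denotes the set of all $B^{\mathcal D}$-factorizations of $b$. The adjustment of $s\in S$ is ${\rm adj}(s)=s-{\rm ord}(s;S)e$, and ${\rm adj}(U)=\{{\rm adj}(s):s\in U\}$. We write $S_i=\{s\in S: s\equiv i \pmod e\}$.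 The sets $\mathcal R(u_j)$ are defined recursively by $\mathcal R(u_0)=\mathcal P(u_0)$ and, for $j>0$, $\mathcal R(u_j)=\{\mathbf x\in\mathcal P(u_j): |\mathbf x|<\min{\rm ord}(u_{j-1};B^{\mathcal D})-\frac{u_j-u_{j-1}}{e}\}$. *)

theory Defs
  imports Complex_Main
begin

definition numerical_semigroup :: "nat set \<Rightarrow> bool" where
  "numerical_semigroup S \<longleftrightarrow> 0 \<in> S \<and> (\<forall>x\<in>S. \<forall>y\<in>S. x + y \<in> S) \<and> finite (UNIV - S)"

definition minimal_generators :: "nat set \<Rightarrow> nat set" where
  "minimal_generators S = {x \<in> S. x \<noteq> 0 \<and> \<not> (\<exists>y\<in>S. \<exists>z\<in>S. y \<noteq> 0 \<and> z \<noteq> 0 \<and> x = y + z)}"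

text \<open>Factorizations of n with respect to a generating tuple gs (as a list):
  tuples c of the same length with sum c_i * gs_i = n. The length of c is sum_list c.\<close>
definition factorizations :: "nat list \<Rightarrow> nat \<Rightarrow> nat list set" where
  "factorizations gs n = {c. length c = length gs \<and> (\<Sum>i<length gs. c ! i * gs ! i) = n}"

definition ord_S :: "nat list \<Rightarrow> nat \<Rightarrow> nat" where
  "ord_S gs n = Max (sum_list ` factorizations gs n)"

definition dmax :: "nat list \<Rightarrow> nat \<Rightarrow> nat" where
  "dmax gs n = card {c \<in> factorizations gs n. sum_list c = ord_S gs n}"

definition blowup_gens :: "nat list \<Rightarrow> nat list" where
  "blowup_gens gs = hd gs # map (\<lambda>a. a - hd gs) (tl gs)"

definition minord :: "nat list \<Rightarrow> nat \<Rightarrow> nat" where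
  "minord D b = Min (sum_list ` factorizations D b)"

definition adj :: "nat list \<Rightarrow> nat \<Rightarrow> nat" where
  "adj gs s = s - ord_S gs s * hd gs"

definition residue_class :: "nat set \<Rightarrow> nat \<Rightarrow> nat \<Rightarrow> nat set" where
  "residue_class S e i = {s \<in> S. s mod e = i}"

definition pred_in :: "nat set \<Rightarrow> nat \<Rightarrow> nat" where
  "pred_in A u = Max {v \<in> A. v < u}"

definition R_set :: "nat list \<Rightarrow> nat set \<Rightarrow> nat \<Rightarrow> nat list set" where
  "R_set gs A u =
     (if \<not> (\<exists>v\<in>A. v < u) then factorizations (blowup_gens gs) u
      else {x \<in> factorizations (blowup_gens gs) u.
              real (sum_list x) < real (minord (blowup_gens gs) (pred_in A u))
                                   - (real u - real (pred_in A u)) / real (hd gs)})"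

end

theory Submission
  imports Defs
begin


definition lin :: "nat list \<Rightarrow> nat list \<Rightarrow> nat" where
  "lin c g = (\<Sum>i<length g. c ! i * g ! i)"

lemma lin_Cons: "lin (c # cs) (g # gs) = c * g + lin cs gs"
  unfolding lin_def length_Cons sum.lessThan_Suc_shift by simp

lemma fact_lin: "factorizations g n = {c. length c = length g \<and> lin c g = n}"
  unfolding factorizations_def lin_def by simp

lemma fact_cons: "c \<in> factorizations (g # gs) n \<longleftrightarrow>
   (\<exists>c0 y. c = c0 # y \<and> length y = length gs \<and> c0 * g + lin y gs = n)"
  unfolding fact_lin by (auto simp: length_Suc_conv lin_Cons)

lemma fin_fact:
  assumes "\<forall>x\<in>set g. 0 < x"
  shows "finite (factorizations g n)"
proof -
  have "factorizations g n \<subseteq> {xs. set xs \<subseteq> {..n} \<and> length xs = length g}"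
  proof
    fix c assume c: "c \<in> factorizations g n"
    hence len: "length c = length g" and s: "lin c g = n" by (auto simp: fact_lin)
    have "set c \<subseteq> {..n}"
    proof
      fix x assume "x \<in> set c"
      then obtain k where k: "k < length c" "x = c ! k" by (auto simp: in_set_conv_nth)
      have "0 < g ! k" using assms k len by auto
      hence "c ! k \<le> c ! k * g ! k" by simp
      also have "\<dots> \<le> lin c g" unfolding lin_def
        by (rule member_le_sum) (use k len in auto)
      finally show "x \<in> {..n}" using k s by simp
    qed
    thus "c \<in> {xs. set xs \<subseteq> {..n} \<and> length xs = length g}" using len by simp
  qed
  moreover have "finite {xs. set xs \<subseteq> {..n} \<and> length xs = length g}"
    by (rule finite_lists_length_eq) simp
  ultimately show ?thesis by (rule finite_subset)
qed

lemma lin_add: "length c1 = length g \<Longrightarrow> length c2 = length g \<Longrightarrow>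
  lin (map (\<lambda>k. c1 ! k + c2 ! k) [0..<length g]) g = lin c1 g + lin c2 g"
  unfolding lin_def by (simp add: algebra_simps sum.distrib)

lemma lin_unit: "j < length g \<Longrightarrow> lin (map (\<lambda>k. if k = j then 1 else 0) [0..<length g]) g = g ! j"
proof -
  assume j: "j < length g"
  have "lin (map (\<lambda>k. if k = j then 1 else 0) [0..<length g]) g
      = (\<Sum>i<length g. if i = j then g ! i else 0)"
    unfolding lin_def by (rule sum.cong) auto
  also have "\<dots> = g ! j" using j by (simp add: sum.delta)
  finally show ?thesis .
qed

lemma lin_zero: "lin (replicate (length g) 0) g = 0"
  unfolding lin_def by simp



locale NS =
  fixes S :: "nat set" and e :: nat and as :: "nat list" and i :: nat
  assumes ns: "numerical_semigroup S"
    and srt: "sorted_wrt (<) (e # as)"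
    and mg: "set (e # as) = minimal_generators S"
    and ilt: "i < e"
begin

abbreviation "ds \<equiv> map (\<lambda>a. a - e) as"
abbreviation "ord s \<equiv> ord_S (e # as) s"
abbreviation "M z \<equiv> minord (blowup_gens (e # as)) z"
abbreviation "A \<equiv> adj (e # as) ` residue_class S e i"

lemma bg: "blowup_gens (e # as) = e # ds" by (simp add: blowup_gens_def)

lemma e_pos: "0 < e"
  using mg by (auto simp: minimal_generators_def)

lemma as_gt: "a \<in> set as \<Longrightarrow> e < a"
  using srt by simp

lemma gens_S: "set (e # as) \<subseteq> S"
  using mg by (auto simp: minimal_generators_def)

lemma S0: "0 \<in> S" and Sadd: "x \<in> S \<Longrightarrow> y \<in> S \<Longrightarrow> x + y \<in> S"
  using ns by (auto simp: numerical_semigroup_def)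

lemma Smult: "x \<in> S \<Longrightarrow> k * x \<in> S"
  by (induction k) (auto intro: S0 Sadd)

lemma Ssum: "finite I \<Longrightarrow> (\<forall>j\<in>I. f j \<in> S) \<Longrightarrow> sum f I \<in> S"
  by (induction I rule: finite_induct) (auto intro: S0 Sadd)

lemma lin_S: "set g \<subseteq> S \<Longrightarrow> lin c g \<in> S"
  unfolding lin_def
  by (rule Ssum) (auto simp: mult.commute intro!: Smult)

lemma pos_gs: "\<forall>x\<in>set (e # as). 0 < x"
  using e_pos as_gt by fastforce

lemma pos_D: "\<forall>x\<in>set (blowup_gens (e # as)). 0 < x"
  using e_pos as_gt by (fastforce simp: bg)

lemma lin_as: "length y = length as \<Longrightarrow> lin y as = lin y ds + sum_list y * e"
proof -
  assume len: "length y = length as"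
  have "lin y as = (\<Sum>k<length as. y ! k * ds ! k + y ! k * e)"
    unfolding lin_def
  proof (rule sum.cong)
    fix k assume "k \<in> {..<length as}"
    hence "e < as ! k" using as_gt by auto
    thus "y ! k * as ! k = y ! k * ds ! k + y ! k * e"
      using \<open>k \<in> _\<close> by (simp add: algebra_simps)
  qed simp
  also have "\<dots> = lin y ds + (\<Sum>k<length as. y ! k) * e"
    unfolding lin_def by (simp add: sum.distrib sum_distrib_right)
  also have "(\<Sum>k<length as. y ! k) = sum_list y"
    using len by (simp add: sum_list_sum_nth atLeast0LessThan)
  finally show ?thesis .
qed

lemma gen_exists:
  assumes "s \<in> S"
  shows "\<exists>c. length c = length (e # as) \<and> lin c (e # as) = s"
  using assms
proof (induction s rule: less_induct)
  case (less s)
  let ?g = "e # as"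
  show ?case
  proof (cases "s = 0")
    case True thus ?thesis
      using lin_zero[of ?g] by (metis length_replicate)
  next
    case False
    show ?thesis
    proof (cases "s \<in> minimal_generators S")
      case True
      then obtain j where j: "j < length ?g" "s = ?g ! j"
        using mg by (metis in_set_conv_nth)
      show ?thesis
        by (intro exI[of _ "map (\<lambda>k. if k = j then 1 else 0) [0..<length ?g]"])
           (simp only: lin_unit[OF j(1)] j(2) length_map length_upt, simp)
    next
      case nm: False
      then obtain y z where yz: "y \<in> S" "z \<in> S" "y \<noteq> 0" "z \<noteq> 0" "s = y + z"
        using False less.prems by (auto simp: minimal_generators_def)
      obtain c1 where c1: "length c1 = length ?g" "lin c1 ?g = y"
        using less.IH[of y] yz by auto
      obtain c2 where c2: "length c2 = length ?g" "lin c2 ?g = z"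
        using less.IH[of z] yz by auto
      show ?thesis
        by (intro exI[of _ "map (\<lambda>k. c1 ! k + c2 ! k) [0..<length ?g]"])
           (simp only: lin_add[OF c1(1) c2(1)] c1(2) c2(2) yz(5) length_map length_upt, simp)
    qed
  qed
qed

lemma fin_S: "finite (factorizations (e # as) s)"
  by (rule fin_fact[OF pos_gs])

lemma fin_P: "finite (factorizations (blowup_gens (e # as)) z)"
  by (rule fin_fact[OF pos_D])

lemma ord_ge:
  assumes "length y = length as" "c0 * e + lin y as = s"
  shows "c0 + sum_list y \<le> ord s"
proof -
  have "c0 # y \<in> factorizations (e # as) s" using assms by (auto simp: fact_cons)
  hence "sum_list (c0 # y) \<in> sum_list ` factorizations (e # as) s" by blast
  thus ?thesis unfolding ord_S_def using Max_ge[OF finite_imageI[OF fin_S]] by fastforce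
qed

lemma ord_ex:
  assumes "s \<in> S"
  shows "\<exists>c0 y. length y = length as \<and> c0 * e + lin y as = s \<and> c0 + sum_list y = ord s"
proof -
  have ne: "factorizations (e # as) s \<noteq> {}"
    using gen_exists[OF assms] by (auto simp: fact_lin)
  have "ord s \<in> sum_list ` factorizations (e # as) s"
    unfolding ord_S_def by (rule Max_in) (use fin_S ne in auto)
  then obtain c where c: "c \<in> factorizations (e # as) s" "sum_list c = ord s" by auto
  then obtain c0 y where "c = c0 # y" "length y = length as" "c0 * e + lin y as = s"
    unfolding fact_cons by blast
  thus ?thesis using c(2) by auto
qed

lemma M_le:
  assumes "length y = length as" "x0 * e + lin y ds = z"
  shows "M z \<le> x0 + sum_list y"
proof -
  have "x0 # y \<in> factorizations (blowup_gens (e # as)) z" using assms by (auto simp: fact_cons bg)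
  hence "sum_list (x0 # y) \<in> sum_list ` factorizations (blowup_gens (e # as)) z" by blast
  thus ?thesis unfolding minord_def using Min_le[OF finite_imageI[OF fin_P]] by fastforce
qed

lemma M_ex:
  assumes "length y = length as" "x0 * e + lin y ds = z"
  shows "\<exists>x0' y'. length y' = length as \<and> x0' * e + lin y' ds = z \<and> x0' + sum_list y' = M z"
proof -
  have "x0 # y \<in> factorizations (blowup_gens (e # as)) z" using assms by (auto simp: fact_cons bg)
  hence ne: "factorizations (blowup_gens (e # as)) z \<noteq> {}" by blast
  have "M z \<in> sum_list ` factorizations (blowup_gens (e # as)) z"
    unfolding minord_def by (rule Min_in) (use fin_P ne in auto)
  then obtain c where c: "c \<in> factorizations (blowup_gens (e # as)) z" "sum_list c = M z" by auto
  then obtain c0 y where "c = c0 # y" "length y = length ds" "c0 * e + lin y ds = z"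
    unfolding bg fact_cons by blast
  thus ?thesis using c(2) by auto
qed

lemma ord_le: "s \<in> S \<Longrightarrow> ord s * e \<le> s"
proof -
  assume "s \<in> S"
  then obtain c0 y where c: "length y = length as" "c0 * e + lin y as = s" "c0 + sum_list y = ord s"
    using ord_ex by blast
  have "ord s * e = c0 * e + sum_list y * e" using c(3) by (metis add_mult_distrib)
  thus ?thesis using c(2) lin_as[OF c(1)] by linarith
qed

lemma adj_eq: "adj (e # as) s = s - ord s * e" by (simp add: adj_def)

lemma MA:
  assumes "s \<in> S"
  shows "\<exists>y. length y = length as \<and> lin y ds = s - ord s * e \<and> sum_list y \<le> ord s"
proof -
  obtain c0 y where c: "length y = length as" "c0 * e + lin y as = s" "c0 + sum_list y = ord s"
    using ord_ex[OF assms] by blast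
  have "ord s * e = c0 * e + sum_list y * e" using c(3) by (metis add_mult_distrib)
  hence "lin y ds = s - ord s * e" using c(2) lin_as[OF c(1)] by linarith
  thus ?thesis using c by auto
qed

lemma A_mod: "s \<in> residue_class S e i \<Longrightarrow> (s - ord s * e) mod e = i"
proof -
  assume s: "s \<in> residue_class S e i"
  hence le: "ord s * e \<le> s" using ord_le by (auto simp: residue_class_def)
  have "s mod e = ((s - ord s * e) + ord s * e) mod e" using le by simp
  also have "\<dots> = (s - ord s * e) mod e" by simp
  finally show ?thesis using s by (simp add: residue_class_def)
qed

end


context NS begin

lemma lemD:
  assumes z: "z mod e = i" and len: "length y = length as" and x: "x0 * e + lin y ds = z"
  shows "\<exists>w\<in>A. w + e * x0 \<le> z \<and> e * M w + w + 2 * e * x0 \<le> e * (x0 + sum_list y) + z"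
proof -
  define s' where "s' = lin y as"
  have s'S: "s' \<in> S" unfolding s'_def by (rule lin_S) (use gens_S in auto)
  have eq: "s' + x0 * e = z + sum_list y * e"
    using lin_as[OF len] x unfolding s'_def by linarith
  have "s' mod e = (s' + x0 * e) mod e" by simp
  also have "\<dots> = (z + sum_list y * e) mod e" using eq by simp
  also have "\<dots> = i" using z by simp
  finally have s'mod: "s' mod e = i" .
  have yo: "sum_list y \<le> ord s'"
    using ord_ge[OF len, of 0 s'] unfolding s'_def by simp
  obtain y' where y': "length y' = length as" "lin y' ds = s' - ord s' * e" "sum_list y' \<le> ord s'"
    using MA[OF s'S] by blast
  define w where "w = s' - ord s' * e"
  have ole: "ord s' * e \<le> s'" using ord_le[OF s'S] .
  have wA: "w \<in> A" unfolding w_def adj_eq[symmetric] using s'S s'mod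
    by (auto simp: residue_class_def)
  have Mw: "M w \<le> ord s'" using M_le[OF y'(1), of 0 w] y'(2) y'(3) unfolding w_def by simp
  have m1: "sum_list y * e \<le> ord s' * e" using yo by simp
  have m2: "e * M w \<le> e * ord s'" using Mw by simp
  have w1: "w + ord s' * e = s'" unfolding w_def using ole by simp
  have "w + x0 * e \<le> z" using eq m1 w1 by linarith
  hence "w + e * x0 \<le> z" by (simp add: mult.commute)
  moreover have "e * M w + w + 2 * e * x0 \<le> e * (x0 + sum_list y) + z"
  proof -
    have "e * (x0 + sum_list y) = x0 * e + sum_list y * e" "2 * e * x0 = x0 * e + x0 * e"
      "e * ord s' = ord s' * e" by (simp_all add: algebra_simps)
    thus ?thesis using eq m2 w1 by linarith
  qed
  ultimately show ?thesis using wA by blast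
qed

lemma lemStrict:
  assumes s: "s \<in> S" and zk: "z + k * e = s - ord s * e" and k: "1 \<le> k"
    and len: "length y = length as" and x: "x0 * e + lin y ds = z"
  shows "ord s + k + 2 * x0 + 1 \<le> x0 + sum_list y"
proof (rule ccontr)
  assume "\<not> ?thesis"
  hence yl: "sum_list y \<le> ord s + k + x0" by simp
  define c0 where "c0 = ord s + k + x0 - sum_list y"
  have c0s: "c0 + sum_list y = ord s + k + x0" unfolding c0_def using yl by simp
  have ole: "ord s * e \<le> s" using ord_le[OF s] .
  have d1: "c0 * e + sum_list y * e = ord s * e + k * e + x0 * e"
    using c0s by (metis add_mult_distrib)
  have "c0 * e + lin y as = s"
    using d1 lin_as[OF len] x zk ole by linarith
  from ord_ge[OF len this] c0s k show False by simp
qed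

lemma A_ex: "w \<in> A \<Longrightarrow> \<exists>s. s \<in> S \<and> s mod e = i \<and> w = s - ord s * e"
  by (auto simp: adj_eq residue_class_def)

lemma A_mod': "w \<in> A \<Longrightarrow> w mod e = i"
  using A_mod by (auto simp: adj_eq)

lemma lemMin:
  assumes v: "v \<in> A" and w: "w \<in> A" and wv: "w \<le> v"
  shows "e * M v + v \<le> e * M w + w"
proof (cases "w = v")
  case True thus ?thesis by simp
next
  case False
  hence wv': "w < v" using wv by simp
  obtain sv where sv: "sv \<in> S" "sv mod e = i" "v = sv - ord sv * e" using A_ex[OF v] by blast
  obtain sw where sw: "sw \<in> S" "sw mod e = i" "w = sw - ord sw * e" using A_ex[OF w] by blast
  have "e dvd v - w" using A_mod'[OF v] A_mod'[OF w] wv mod_eq_dvd_iff_nat by metis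
  then obtain k where k: "v - w = e * k" by blast
  have vk: "w + k * e = v" using k wv by (simp add: mult.commute)
  have k1: "1 \<le> k" using vk wv' by (cases k) auto
  obtain y where y: "length y = length as" "lin y ds = w"
    using MA[OF sw(1)] sw(3) by metis
  obtain x0 y' where y': "length y' = length as" "x0 * e + lin y' ds = w" "x0 + sum_list y' = M w"
    using M_ex[OF y(1), of 0 w] y(2) by auto
  have "ord sv + k + 2 * x0 + 1 \<le> x0 + sum_list y'"
    by (rule lemStrict[OF sv(1) _ k1 y'(1) y'(2)]) (use vk sv(3) in simp)
  hence h: "ord sv + k + 1 \<le> M w" using y'(3) by simp
  obtain yv where yv: "length yv = length as" "lin yv ds = v" "sum_list yv \<le> ord sv"
    using MA[OF sv(1)] sv(3) by metis
  have "M v \<le> ord sv" using M_le[OF yv(1), of 0 v] yv by simp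
  hence "M v + k + 1 \<le> M w" using h by simp
  hence h2: "e * (M v + k + 1) \<le> e * M w" by (rule mult_le_mono2)
  have "e * (M v + k + 1) = e * M v + k * e + e" by (simp add: algebra_simps)
  thus ?thesis using vk h2 by linarith
qed

end


context NS begin

lemma core:
  assumes s0: "s0 \<in> S" "s0 mod e = i" and u: "u = s0 - ord s0 * e"
   and h1: "ord s0 \<le> L"
   and h2: "\<And>c0 y. length y = length as \<Longrightarrow> c0 * e + lin y as = u + L * e \<Longrightarrow> c0 + sum_list y \<le> L"
   and h3: "R_set (e # as) A u = (\<lambda>y. 0 # y) ` {y. length y = length as \<and> lin y ds = u \<and> sum_list y \<le> L}"
  shows "\<exists>s\<in>residue_class S e i. dmax (e # as) s = card (R_set (e # as) A u)"
proof -
  define s where "s = u + L * e"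
  define Y where "Y = {y. length y = length as \<and> lin y ds = u \<and> sum_list y \<le> L}"
  have ole: "ord s0 * e \<le> s0" using ord_le[OF s0(1)] .
  have ss: "s = s0 + (L - ord s0) * e"
  proof -
    have "(L - ord s0) * e + ord s0 * e = L * e" using h1 by (metis add_mult_distrib le_add_diff_inverse2)
    thus ?thesis unfolding s_def u using ole by linarith
  qed
  have sS: "s \<in> S" unfolding ss using s0(1) gens_S by (auto intro!: Sadd Smult)
  have smod: "s mod e = i" unfolding ss using s0(2) by simp
  have ords: "ord s = L"
  proof (rule antisym)
    obtain c0 y where c: "length y = length as"
      "c0 * e + lin y as = s0" "c0 + sum_list y = ord s0"
      using ord_ex[OF s0(1)] by blast
    have "(c0 + (L - ord s0)) * e + lin y as = s" unfolding ss using c(2)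
      by (simp add: algebra_simps)
    from ord_ge[OF c(1) this] show "L \<le> ord s" using c(3) h1 by simp
  next
    obtain c0 y where c: "length y = length as" "c0 * e + lin y as = s" "c0 + sum_list y = ord s"
      using ord_ex[OF sS] by blast
    have "c0 + sum_list y \<le> L" using h2[OF c(1)] c(2) unfolding s_def by blast
    thus "ord s \<le> L" using c(3) by simp
  qed
  have F: "{c \<in> factorizations (e # as) s. sum_list c = ord s} = (\<lambda>y. (L - sum_list y) # y) ` Y"
  proof (rule set_eqI, rule iffI)
    fix c assume "c \<in> {c \<in> factorizations (e # as) s. sum_list c = ord s}"
    then obtain c0 y where c: "c = c0 # y" "length y = length as" "c0 * e + lin y as = s"
      "c0 + sum_list y = L"
      using ords unfolding fact_cons by auto
    have "c0 * e + sum_list y * e = L * e" using c(4) by (metis add_mult_distrib)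
    hence "lin y ds = u" using c(3) lin_as[OF c(2)] unfolding s_def by linarith
    hence "y \<in> Y" using c Y_def by auto
    moreover have "c0 = L - sum_list y" using c(4) by simp
    ultimately show "c \<in> (\<lambda>y. (L - sum_list y) # y) ` Y" using c(1) by blast
  next
    fix c assume "c \<in> (\<lambda>y. (L - sum_list y) # y) ` Y"
    then obtain y where y: "c = (L - sum_list y) # y" "length y = length as" "lin y ds = u"
      "sum_list y \<le> L" unfolding Y_def by blast
    have "(L - sum_list y) * e + sum_list y * e = L * e" using y(4)
      by (metis add_mult_distrib le_add_diff_inverse2)
    hence "(L - sum_list y) * e + lin y as = s" using lin_as[OF y(2)] y(3) unfolding s_def by linarith
    thus "c \<in> {c \<in> factorizations (e # as) s. sum_list c = ord s}"
      using y ords by (auto simp: fact_cons)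
  qed
  have "dmax (e # as) s = card ((\<lambda>y. (L - sum_list y) # y) ` Y)"
    unfolding dmax_def F ..
  also have "\<dots> = card Y" by (rule card_image) (auto simp: inj_on_def)
  also have "\<dots> = card ((\<lambda>y. 0 # y) ` Y)" by (rule card_image[symmetric]) (auto simp: inj_on_def)
  also have "\<dots> = card (R_set (e # as) A u)" unfolding h3 Y_def ..
  finally show ?thesis using sS smod by (auto simp: residue_class_def)
qed

end


context NS begin

lemma P_cons: "x \<in> factorizations (blowup_gens (e # as)) z \<longleftrightarrow>
   (\<exists>x0 y. x = x0 # y \<and> length y = length as \<and> x0 * e + lin y ds = z)"
  unfolding bg fact_cons by simp

lemma longer:
  assumes len: "length y = length as" and c: "c0 * e + lin y as = u + L * e"
    and gt: "L < c0 + sum_list y"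
  shows "lin y ds + (c0 + sum_list y - L) * e = u"
proof -
  have "(c0 + sum_list y - L) * e + L * e = c0 * e + sum_list y * e"
    using gt by (metis add_mult_distrib le_add_diff_inverse2 less_imp_le)
  thus ?thesis using c lin_as[OF len] by linarith
qed

lemma main:
  assumes uA: "u \<in> A"
  shows "\<exists>s\<in>residue_class S e i. dmax (e # as) s = card (R_set (e # as) A u)"
proof -
  obtain s0 where s0: "s0 \<in> S" "s0 mod e = i" "u = s0 - ord s0 * e" using A_ex[OF uA] by blast
  have umod: "u mod e = i" using A_mod'[OF uA] .
  have ep: "0 < e" by (rule e_pos)
  show ?thesis
  proof (cases "\<exists>v\<in>A. v < u")
    case False
    define L where "L = max (ord s0) (Max (sum_list ` factorizations (blowup_gens (e # as)) u))"
    show ?thesis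
    proof (rule core[OF s0, of L])
      show "ord s0 \<le> L" unfolding L_def by simp
    next
      fix c0 y assume len: "length y = length as" and c: "c0 * e + lin y as = u + L * e"
      show "c0 + sum_list y \<le> L"
      proof (rule ccontr)
        assume "\<not> ?thesis"
        hence gt: "L < c0 + sum_list y" by simp
        define k where "k = c0 + sum_list y - L"
        have zk: "lin y ds + k * e = u" using longer[OF len c gt] unfolding k_def .
        have k1: "1 \<le> k" using gt unfolding k_def by simp
        have "lin y ds mod e = i" proof -
          have "(lin y ds + k * e) mod e = lin y ds mod e" by simp
          thus ?thesis using zk umod by simp
        qed
        from lemD[OF this len, of 0] obtain w where w: "w \<in> A" "w \<le> lin y ds" by auto
        have "k * e \<ge> e" using k1 by simp
        hence "w < u" using w(2) zk ep by linarith
        thus False using False w(1) by blast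
      qed
    next
      have R: "R_set (e # as) A u = factorizations (blowup_gens (e # as)) u"
        using False by (simp add: R_set_def)
      show "R_set (e # as) A u = (\<lambda>y. 0 # y) ` {y. length y = length as \<and> lin y ds = u \<and> sum_list y \<le> L}"
        unfolding R
      proof (rule set_eqI, rule iffI)
        fix x assume xP: "x \<in> factorizations (blowup_gens (e # as)) u"
        then obtain x0 y where x: "x = x0 # y" "length y = length as" "x0 * e + lin y ds = u"
          unfolding P_cons by blast
        have x00: "x0 = 0"
        proof (rule ccontr)
          assume "x0 \<noteq> 0"
          from lemD[OF umod x(2,3)] obtain w where w: "w \<in> A" "w + e * x0 \<le> u" by auto
          have "w < u" proof -
            have "0 < e * x0" using \<open>x0 \<noteq> 0\<close> ep by simp
            thus ?thesis using w(2) by linarith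
          qed
          thus False using False w(1) by blast
        qed
        have "sum_list x \<le> Max (sum_list ` factorizations (blowup_gens (e # as)) u)"
          by (rule Max_ge) (use xP fin_P in auto)
        hence "sum_list y \<le> L" using x x00 unfolding L_def by simp
        thus "x \<in> (\<lambda>y. 0 # y) ` {y. length y = length as \<and> lin y ds = u \<and> sum_list y \<le> L}"
          using x x00 by auto
      next
        fix x assume "x \<in> (\<lambda>y. 0 # y) ` {y. length y = length as \<and> lin y ds = u \<and> sum_list y \<le> L}"
        thus "x \<in> factorizations (blowup_gens (e # as)) u" unfolding P_cons by auto
      qed
    qed
  next
    case True
    define v where "v = pred_in A u"
    have fin: "finite {v \<in> A. v < u}" by (rule finite_subset[of _ "{..<u}"]) auto
    have ne: "{v \<in> A. v < u} \<noteq> {}" using True by blast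
    have "v \<in> {v \<in> A. v < u}" unfolding v_def pred_in_def by (rule Max_in[OF fin ne])
    hence vA: "v \<in> A" and vu: "v < u" by auto
    have vmax: "\<And>w. w \<in> A \<Longrightarrow> w < u \<Longrightarrow> w \<le> v"
      unfolding v_def pred_in_def by (rule Max_ge[OF fin]) auto
    have "e dvd u - v" using A_mod'[OF vA] umod vu mod_eq_dvd_iff_nat less_imp_le by metis
    then obtain k0 where "u - v = e * k0" by blast
    hence uv: "u = v + k0 * e" using vu by (simp add: mult.commute)
    have k01: "1 \<le> k0" using uv vu by (cases k0) auto
    obtain sv where sv: "sv \<in> S" "sv mod e = i" "v = sv - ord sv * e" using A_ex[OF vA] by blast
    obtain yv where yv: "length yv = length as" "lin yv ds = v" using MA[OF sv(1)] sv(3) by metis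
    obtain x0v yv' where yv': "length yv' = length as" "x0v * e + lin yv' ds = v" "x0v + sum_list yv' = M v"
      using M_ex[OF yv(1), of 0 v] yv(2) by auto
    define m where "m = M v"
    have "ord s0 + k0 + 2 * x0v + 1 \<le> x0v + sum_list yv'"
      by (rule lemStrict[OF s0(1) _ k01 yv'(1,2)]) (use uv s0(3) in simp)
    hence mge: "ord s0 + k0 + 1 \<le> m" using yv'(3) unfolding m_def by simp
    define L where "L = m - k0 - 1"
    have key: "\<And>w. w \<in> A \<Longrightarrow> w < u \<Longrightarrow> e * m + v \<le> e * M w + w"
      unfolding m_def by (rule lemMin[OF vA]) (use vmax in auto)
    show ?thesis
    proof (rule core[OF s0, of L])
      show "ord s0 \<le> L" unfolding L_def using mge by simp
    next
      fix c0 y assume len: "length y = length as" and c: "c0 * e + lin y as = u + L * e"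
      show "c0 + sum_list y \<le> L"
      proof (rule ccontr)
        assume "\<not> ?thesis"
        hence gt: "L < c0 + sum_list y" by simp
        define k where "k = c0 + sum_list y - L"
        have zk: "lin y ds + k * e = u" using longer[OF len c gt] unfolding k_def .
        have k1: "1 \<le> k" using gt unfolding k_def by simp
        have "lin y ds mod e = i" proof -
          have "(lin y ds + k * e) mod e = lin y ds mod e" by simp
          thus ?thesis using zk umod by simp
        qed
        from lemD[OF this len, of 0] obtain w where w: "w \<in> A" "w \<le> lin y ds"
          "e * M w + w \<le> e * sum_list y + lin y ds" by auto
        have "k * e \<ge> e" using k1 by simp
        hence "w < u" using w(2) zk ep by linarith
        from key[OF w(1) this] have h: "e * m + v \<le> e * sum_list y + lin y ds" using w(3) by linarith
        have "e * sum_list y \<le> e * (c0 + sum_list y)" by simp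
        hence "e * m + k * e \<le> e * (c0 + sum_list y) + k0 * e" using h zk uv by linarith
        hence "e * (m + k) \<le> e * (c0 + sum_list y + k0)" by (simp add: algebra_simps)
        hence "m + k \<le> c0 + sum_list y + k0" using ep by simp
        thus False using mge gt unfolding k_def L_def by linarith
      qed
    next
      have rr: "(real u - real v) / real e = real k0" using uv ep by (simp add: field_simps)
      have R: "R_set (e # as) A u = {x \<in> factorizations (blowup_gens (e # as)) u. sum_list x + k0 < m}"
      proof -
        have "\<And>x. (real (sum_list x) < real m - real k0) = (sum_list x + k0 < m)" by linarith
        thus ?thesis using True rr unfolding R_set_def v_def[symmetric] m_def[symmetric] by simp
      qed
      show "R_set (e # as) A u = (\<lambda>y. 0 # y) ` {y. length y = length as \<and> lin y ds = u \<and> sum_list y \<le> L}"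
        unfolding R
      proof (rule set_eqI, rule iffI)
        fix x assume "x \<in> {x \<in> factorizations (blowup_gens (e # as)) u. sum_list x + k0 < m}"
        hence xP: "x \<in> factorizations (blowup_gens (e # as)) u" and xl: "sum_list x + k0 < m" by auto
        then obtain x0 y where x: "x = x0 # y" "length y = length as" "x0 * e + lin y ds = u"
          unfolding P_cons by blast
        have x00: "x0 = 0"
        proof (rule ccontr)
          assume "x0 \<noteq> 0"
          from lemD[OF umod x(2,3)] obtain w where w: "w \<in> A" "w + e * x0 \<le> u"
            "e * M w + w + 2 * e * x0 \<le> e * (x0 + sum_list y) + u" by auto
          have "w < u" proof -
            have "0 < e * x0" using \<open>x0 \<noteq> 0\<close> ep by simp
            thus ?thesis using w(2) by linarith
          qed
          from key[OF w(1) this] w(3) uv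
          have "e * m + 2 * e * x0 \<le> e * (x0 + sum_list y) + k0 * e" by linarith
          hence "e * (m + 2 * x0) \<le> e * (x0 + sum_list y + k0)" by (simp add: algebra_simps)
          hence "m + 2 * x0 \<le> x0 + sum_list y + k0" using ep by simp
          thus False using xl x by simp
        qed
        hence "sum_list y \<le> L" using x xl unfolding L_def by simp
        thus "x \<in> (\<lambda>y. 0 # y) ` {y. length y = length as \<and> lin y ds = u \<and> sum_list y \<le> L}"
          using x x00 by auto
      next
        fix x assume "x \<in> (\<lambda>y. 0 # y) ` {y. length y = length as \<and> lin y ds = u \<and> sum_list y \<le> L}"
        then obtain y where "x = 0 # y" "length y = length as" "lin y ds = u" "sum_list y \<le> L" by blast
        thus "x \<in> {x \<in> factorizations (blowup_gens (e # as)) u. sum_list x + k0 < m}"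
          using mge unfolding P_cons L_def by auto
      qed
    qed
  qed
qed

end

theorem theorem3p9:
  fixes S :: "nat set" and e :: nat and as :: "nat list" and i :: nat
  assumes "numerical_semigroup S"
    and "sorted_wrt (<) (e # as)"
    and "set (e # as) = minimal_generators S"
    and "i < e"
  shows "\<forall>u \<in> adj (e # as) ` residue_class S e i.
           \<exists>s \<in> residue_class S e i.
             dmax (e # as) s = card (R_set (e # as) (adj (e # as) ` residue_class S e i) u)"
proof -
  interpret NS S e as i using assms by unfold_locales
  show ?thesis using main by blast
qed


end
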